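(* Let $G$ be a simple $(3,4)$-biregular $X,Y$-bigraph (vertices of $X$ of degree 3, of $Y$ of degree 4), so $|X|=4k$ and $|Y|=3k$ for some $k$, and suppose $G$ has a full 3-regular subgraph $H$. Let $X'=X\cap V(H)$ and $X_0=X\setminus X'=\{x^0_1,\dots,x^0_k\}$; the neighborhoods $T_i=N_G(x^0_i)$, $1\le i\le k$, partition $Y$ into triples, and let $\mathbf{T}=(T_1,\dots,T_k)$. Fix a proper 3-edge-coloring $c$ of $H$ with colors $1,2,3$, let $H'$ be the spanning subgraph of $H$ consisting of the edges of colors 1 and 2, and let $F$ be the graph with vertex set $Y$ having, for each $x\in X'$ with $H'$-neighbors $y,y'$, an edge $yy'$ (so $F$ is 2-regular, possibly with multiple edges, and its components are cycles). If $\mathbf{T}$ has a mixed transversal (with respect to $F$), then $G$ has a proper path-factor.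
   Context: A simple graph has no loops or multiple edges. An $X,Y$-bigraph is a bipartite graph with partite sets $X,Y$; a $(3,4)$-biregular bigraph has all vertices of one part of degree 3 and all of the other part of degree 4. A full 3-regular subgraph is a 3-regular subgraph containing every vertex of degree 4. A proper path-factor of $G$ is a spanning subgraph each of whose components is a path with both endpoints in $X$ and length in $\{2,4,6,8\}$. For the family $\mathbf{T}$ of disjoint triples on $V(F)$: a transversal is a set $S$ containing exactly one element of each triple; an independent transversal is a transversal that is an independent set in $F$; a spread transversal is a transversal $S$ such that, for some choice of direction on each cycle of $F$, for every vertex $v$ of $F$ not in $S$ there is a vertex of $S$ among the next three vertices after $v$ in the forward direction along its cycle. Let $F^*$ be the 4-regular graph obtained from $F$ by adding, for each triple of $\mathbf{T}$, a triangle on its three vertices. A mixed transversal is a transversal $S$ such that for each component $C$ of $F^*$, the set $S\cap V(C)$ is an independent transversal or a spread transversal of the triples contained in $V(C)$ with respect to the cycles of $F$ contained in $C$. *)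

theory Defs
  imports Main
begin

definition nbrs :: "('a \<Rightarrow> 'a \<Rightarrow> bool) \<Rightarrow> 'a \<Rightarrow> 'a set" where
  "nbrs E v = {u. E v u}"

definition simple_graph :: "'a set \<Rightarrow> ('a \<Rightarrow> 'a \<Rightarrow> bool) \<Rightarrow> bool" where
  "simple_graph V E \<longleftrightarrow> finite V \<and> (\<forall>u v. E u v \<longrightarrow> u \<in> V \<and> v \<in> V)
     \<and> (\<forall>u v. E u v \<longrightarrow> E v u) \<and> (\<forall>u. \<not> E u u)"

definition bigraph34 :: "'a set \<Rightarrow> 'a set \<Rightarrow> ('a \<Rightarrow> 'a \<Rightarrow> bool) \<Rightarrow> bool" where
  "bigraph34 X Y E \<longleftrightarrow> finite X \<and> finite Y \<and> X \<inter> Y = {} \<and> simple_graph (X \<union> Y) E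
     \<and> (\<forall>u v. E u v \<longrightarrow> (u \<in> X \<and> v \<in> Y) \<or> (u \<in> Y \<and> v \<in> X))
     \<and> (\<forall>x\<in>X. card (nbrs E x) = 3) \<and> (\<forall>y\<in>Y. card (nbrs E y) = 4)"

definition full_3reg_subgraph ::
  "'a set \<Rightarrow> 'a set \<Rightarrow> ('a \<Rightarrow> 'a \<Rightarrow> bool) \<Rightarrow> 'a set \<Rightarrow> ('a \<Rightarrow> 'a \<Rightarrow> bool) \<Rightarrow> bool" where
  "full_3reg_subgraph X Y E VH EH \<longleftrightarrow> VH \<subseteq> X \<union> Y
     \<and> (\<forall>u v. EH u v \<longrightarrow> E u v) \<and> (\<forall>u v. EH u v \<longrightarrow> EH v u)
     \<and> (\<forall>u v. EH u v \<longrightarrow> u \<in> VH \<and> v \<in> VH)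
     \<and> (\<forall>v\<in>VH. card (nbrs EH v) = 3)
     \<and> (\<forall>v\<in>X \<union> Y. card (nbrs E v) = 4 \<longrightarrow> v \<in> VH)"

definition proper_3_edge_colouring :: "('a \<Rightarrow> 'a \<Rightarrow> bool) \<Rightarrow> ('a \<Rightarrow> 'a \<Rightarrow> nat) \<Rightarrow> bool" where
  "proper_3_edge_colouring EH c \<longleftrightarrow>
     (\<forall>u v. EH u v \<longrightarrow> c u v \<in> {1,2,3} \<and> c u v = c v u)
     \<and> (\<forall>v u w. EH v u \<and> EH v w \<and> u \<noteq> w \<longrightarrow> c v u \<noteq> c v w)"

definition mg_adj :: "'e set \<Rightarrow> ('e \<Rightarrow> 'v set) \<Rightarrow> 'v \<Rightarrow> 'v \<Rightarrow> bool" where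
  "mg_adj I ends u v \<longleftrightarrow> (\<exists>e\<in>I. ends e = {u, v} \<and> u \<noteq> v)"

definition Fstar_adj :: "'v set set \<Rightarrow> 'e set \<Rightarrow> ('e \<Rightarrow> 'v set) \<Rightarrow> 'v \<Rightarrow> 'v \<Rightarrow> bool" where
  "Fstar_adj \<T> I ends u v \<longleftrightarrow> mg_adj I ends u v \<or> (\<exists>T\<in>\<T>. u \<in> T \<and> v \<in> T \<and> u \<noteq> v)"

definition Fstar_component :: "'v set set \<Rightarrow> 'e set \<Rightarrow> ('e \<Rightarrow> 'v set) \<Rightarrow> 'v \<Rightarrow> 'v set" where
  "Fstar_component \<T> I ends v = {u. (Fstar_adj \<T> I ends)\<^sup>*\<^sup>* v u}"

definition transversal :: "'v set set \<Rightarrow> 'v set \<Rightarrow> bool" where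
  "transversal \<T> S \<longleftrightarrow> S \<subseteq> \<Union>\<T> \<and> (\<forall>T\<in>\<T>. card (S \<inter> T) = 1)"

definition independent_in :: "'e set \<Rightarrow> ('e \<Rightarrow> 'v set) \<Rightarrow> 'v set \<Rightarrow> bool" where
  "independent_in I ends A \<longleftrightarrow> (\<forall>u\<in>A. \<forall>v\<in>A. \<not> mg_adj I ends u v)"

text \<open>A choice of direction on every cycle of the 2-regular multigraph F on V, encoded by the
  successor map \<sigma>: each vertex v leaves along its own edge e v towards \<sigma> v, every edge being
  used exactly once.\<close>
definition cycle_direction :: "'v set \<Rightarrow> 'e set \<Rightarrow> ('e \<Rightarrow> 'v set) \<Rightarrow> ('v \<Rightarrow> 'v) \<Rightarrow> bool" where
  "cycle_direction V I ends \<sigma> \<longleftrightarrow> bij_betw \<sigma> V V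
     \<and> (\<exists>e. bij_betw e V I \<and> (\<forall>v\<in>V. ends (e v) = {v, \<sigma> v}))"

definition spread_on :: "('v \<Rightarrow> 'v) \<Rightarrow> 'v set \<Rightarrow> 'v set \<Rightarrow> bool" where
  "spread_on \<sigma> C S \<longleftrightarrow> (\<forall>v\<in>C - S. \<exists>i\<in>{1,2,3::nat}. (\<sigma> ^^ i) v \<in> S)"

definition mixed_transversal :: "'v set \<Rightarrow> 'v set set \<Rightarrow> 'e set \<Rightarrow> ('e \<Rightarrow> 'v set) \<Rightarrow> 'v set \<Rightarrow> bool" where
  "mixed_transversal V \<T> I ends S \<longleftrightarrow> transversal \<T> S \<and>
     (\<forall>v\<in>V. let C = Fstar_component \<T> I ends v in
        independent_in I ends (S \<inter> C)
        \<or> (\<exists>\<sigma>. cycle_direction V I ends \<sigma> \<and> spread_on \<sigma> C S))"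

definition proper_path_factor :: "'a set \<Rightarrow> 'a set \<Rightarrow> ('a \<Rightarrow> 'a \<Rightarrow> bool) \<Rightarrow> ('a \<Rightarrow> 'a \<Rightarrow> bool) \<Rightarrow> bool" where
  "proper_path_factor X Y E P \<longleftrightarrow>
     (\<forall>u v. P u v \<longrightarrow> E u v) \<and> (\<forall>u v. P u v \<longrightarrow> P v u) \<and>
     (\<forall>v\<in>X \<union> Y. \<exists>vs. distinct vs \<and> set vs = {u. P\<^sup>*\<^sup>* v u}
        \<and> length vs - 1 \<in> {2,4,6,8} \<and> hd vs \<in> X \<and> last vs \<in> X
        \<and> (\<forall>i. Suc i < length vs \<longrightarrow> P (vs ! i) (vs ! Suc i))
        \<and> (\<forall>u\<in>set vs. \<forall>w. P u w \<longrightarrow> (\<exists>i. Suc i < length vs \<and>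
              ((u = vs ! i \<and> w = vs ! Suc i) \<or> (w = vs ! i \<and> u = vs ! Suc i)))))"

end

theory Submission
  imports Defs
begin


definition adj_in :: "'a list \<Rightarrow> 'a \<Rightarrow> 'a \<Rightarrow> bool" where
  "adj_in L u w \<longleftrightarrow> (\<exists>i. Suc i < length L \<and> ((u = L!i \<and> w = L!Suc i) \<or> (w = L!i \<and> u = L!Suc i)))"

lemma successively_nth: "successively R L \<Longrightarrow> Suc i < length L \<Longrightarrow> R (L!i) (L!Suc i)"
proof (induction R L arbitrary: i rule: successively.induct)
  case (3 P x y xs)
  then show ?case by (cases i) auto
qed auto

lemma adj_in_set: "adj_in L u w \<Longrightarrow> u \<in> set L \<and> w \<in> set L"
  unfolding adj_in_def by (auto intro: nth_mem)

lemma path_factor_from_lists: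
  fixes L :: "'k \<Rightarrow> 'a list"
  assumes Esym: "\<And>u v. E u v \<Longrightarrow> E v u"
    and dist: "\<And>k. k \<in> K \<Longrightarrow> distinct (L k)"
    and disj: "\<And>k k'. k \<in> K \<Longrightarrow> k' \<in> K \<Longrightarrow> k \<noteq> k' \<Longrightarrow> set (L k) \<inter> set (L k') = {}"
    and cover: "\<And>v. v \<in> X \<union> Y \<Longrightarrow> \<exists>k\<in>K. v \<in> set (L k)"
    and succ: "\<And>k. k \<in> K \<Longrightarrow> successively E (L k)"
    and len: "\<And>k. k \<in> K \<Longrightarrow> length (L k) - 1 \<in> {2,4,6,8}"
    and hdX: "\<And>k. k \<in> K \<Longrightarrow> hd (L k) \<in> X"
    and lastX: "\<And>k. k \<in> K \<Longrightarrow> last (L k) \<in> X"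
  shows "proper_path_factor X Y E (\<lambda>u w. \<exists>k\<in>K. adj_in (L k) u w)"
proof -
  define P where "P = (\<lambda>u w. \<exists>k\<in>K. adj_in (L k) u w)"
  have PE: "P u w \<Longrightarrow> E u w" for u w
    unfolding P_def adj_in_def using succ successively_nth Esym by metis
  have Psym: "P u w \<Longrightarrow> P w u" for u w
    unfolding P_def adj_in_def by blast
  have uniq: "k \<in> K \<Longrightarrow> k' \<in> K \<Longrightarrow> u \<in> set (L k) \<Longrightarrow> u \<in> set (L k') \<Longrightarrow> k = k'" for k k' u
    using disj by blast
  have main: "\<exists>vs. distinct vs \<and> set vs = {u. P\<^sup>*\<^sup>* v u}
        \<and> length vs - 1 \<in> {2,4,6,8} \<and> hd vs \<in> X \<and> last vs \<in> X
        \<and> (\<forall>i. Suc i < length vs \<longrightarrow> P (vs ! i) (vs ! Suc i))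
        \<and> (\<forall>u\<in>set vs. \<forall>w. P u w \<longrightarrow> (\<exists>i. Suc i < length vs \<and>
              ((u = vs ! i \<and> w = vs ! Suc i) \<or> (w = vs ! i \<and> u = vs ! Suc i))))"
    if v: "v \<in> X \<union> Y" for v
  proof -
    obtain k where k: "k \<in> K" "v \<in> set (L k)" using cover v by blast
    define vs where "vs = L k"
    have step: "Suc i < length vs \<Longrightarrow> P (vs ! i) (vs ! Suc i)" for i
      unfolding P_def vs_def adj_in_def using k(1) by blast
    have sub1: "P\<^sup>*\<^sup>* v u \<Longrightarrow> u \<in> set vs" for u
    proof (induction rule: rtranclp_induct)
      case base then show ?case using k vs_def by simp
    next
      case (step y z)
      then obtain k' where k': "k' \<in> K" "adj_in (L k') y z" unfolding P_def by blast
      then have "y \<in> set (L k')" "z \<in> set (L k')" using adj_in_set by metis+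
      with uniq[of k k' y] k k' step.IH show ?case unfolding vs_def by auto
    qed
    have fwd: "i \<le> j \<Longrightarrow> j < length vs \<Longrightarrow> P\<^sup>*\<^sup>* (vs!i) (vs!j)" for i j
    proof (induction j)
      case 0 then show ?case by simp
    next
      case (Suc j)
      show ?case
      proof (cases "i = Suc j")
        case True then show ?thesis by simp
      next
        case False
        with Suc have "P\<^sup>*\<^sup>* (vs!i) (vs!j)" by simp
        moreover have "P (vs!j) (vs!Suc j)" using step Suc by simp
        ultimately show ?thesis by (rule rtranclp.rtrancl_into_rtrancl)
      qed
    qed
    have bwd: "i \<le> j \<Longrightarrow> j < length vs \<Longrightarrow> P\<^sup>*\<^sup>* (vs!j) (vs!i)" for i j
    proof (induction j)
      case 0 then show ?case by simp
    next
      case (Suc j)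
      show ?case
      proof (cases "i = Suc j")
        case True then show ?thesis by simp
      next
        case False
        with Suc have "P\<^sup>*\<^sup>* (vs!j) (vs!i)" by simp
        moreover have "P (vs!Suc j) (vs!j)" using step Suc Psym by simp
        ultimately show ?thesis by (meson converse_rtranclp_into_rtranclp)
      qed
    qed
    have sub2: "u \<in> set vs \<Longrightarrow> P\<^sup>*\<^sup>* v u" for u
    proof -
      assume u: "u \<in> set vs"
      obtain i where i: "i < length vs" "v = vs!i" using k vs_def by (metis in_set_conv_nth)
      obtain j where j: "j < length vs" "u = vs!j" using u by (metis in_set_conv_nth)
      show ?thesis
      proof (cases "i \<le> j")
        case True then show ?thesis using fwd i j by simp
      next
        case False then show ?thesis using bwd i j by simp
      qed
    qed
    have last: "\<forall>u\<in>set vs. \<forall>w. P u w \<longrightarrow> (\<exists>i. Suc i < length vs \<and>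
              ((u = vs ! i \<and> w = vs ! Suc i) \<or> (w = vs ! i \<and> u = vs ! Suc i)))"
    proof (intro ballI allI impI)
      fix u w assume u: "u \<in> set vs" and "P u w"
      then obtain k' where k': "k' \<in> K" "adj_in (L k') u w" unfolding P_def by blast
      then have "u \<in> set (L k')" using adj_in_set by metis
      with uniq[of k k' u] k k' u have "k' = k" unfolding vs_def by auto
      with k' show "\<exists>i. Suc i < length vs \<and>
              ((u = vs ! i \<and> w = vs ! Suc i) \<or> (w = vs ! i \<and> u = vs ! Suc i))"
        unfolding adj_in_def vs_def by blast
    qed
    show ?thesis
      apply (rule exI[of _ vs])
      using dist[OF k(1)] len[OF k(1)] hdX[OF k(1)] lastX[OF k(1)] step last sub1 sub2
      unfolding vs_def by blast
  qed
  show ?thesis unfolding proper_path_factor_def P_def[symmetric]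
    using PE Psym main by blast
qed



fun segr :: "('a\<Rightarrow>'a) \<Rightarrow> ('a\<Rightarrow>'a) \<Rightarrow> nat \<Rightarrow> 'a \<Rightarrow> 'a list" where
  "segr \<sigma> e 0 y = []"
| "segr \<sigma> e (Suc n) y = y # e y # segr \<sigma> e n (\<sigma> y)"

definition pts :: "('a\<Rightarrow>'a) \<Rightarrow> nat \<Rightarrow> 'a \<Rightarrow> 'a set" where
  "pts \<sigma> n y = (\<lambda>j. (\<sigma>^^j) y) ` {..<n}"

lemma pts_Suc: "pts \<sigma> (Suc n) y = insert y (pts \<sigma> n (\<sigma> y))"
  unfolding pts_def lessThan_Suc_eq_insert_0
  by (auto simp: image_image funpow_Suc_right simp del: funpow.simps)

lemma pts_0: "pts \<sigma> 0 y = {}" by (simp add: pts_def)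

lemma set_segr: "set (segr \<sigma> e n y) = pts \<sigma> n y \<union> e ` pts \<sigma> n y"
  by (induction n arbitrary: y) (auto simp: pts_Suc pts_0)

lemma length_segr: "length (segr \<sigma> e n y) = 2 * n"
  by (induction n arbitrary: y) auto

lemma hd_segr: "0 < n \<Longrightarrow> hd (segr \<sigma> e n y) = y"
  by (cases n) auto

lemma last_segr: "0 < n \<Longrightarrow> last (segr \<sigma> e n y) = e ((\<sigma>^^(n-1)) y)"
proof (induction n arbitrary: y)
  case (Suc n) then show ?case
    by (cases n) (auto simp: funpow_Suc_right simp del: funpow.simps)
qed simp

lemma succ_segr:
  assumes "y \<in> A" "\<And>z. z \<in> A \<Longrightarrow> \<sigma> z \<in> A" "\<And>z. z \<in> A \<Longrightarrow> E z (e z) \<and> E (e z) (\<sigma> z)"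
  shows "successively E (segr \<sigma> e n y)"
  using assms(1)
proof (induction n arbitrary: y)
  case (Suc n)
  then show ?case using assms(2,3)
    by (cases n) (auto simp: successively_Cons)
qed simp

locale core =
  fixes X0 Y X' :: "'a set" and E :: "'a \<Rightarrow> 'a \<Rightarrow> bool" and \<sigma> e :: "'a \<Rightarrow> 'a"
    and S :: "'a set" and spr :: "'a \<Rightarrow> bool"
  assumes finY: "finite Y"
    and d1: "X0 \<inter> Y = {}" and d2: "X' \<inter> Y = {}" and d3: "X0 \<inter> X' = {}"
    and Esym: "\<And>u v. E u v \<Longrightarrow> E v u"
    and sig_bij: "bij_betw \<sigma> Y Y"
    and e_bij: "bij_betw e Y X'"
    and eE: "\<And>y. y \<in> Y \<Longrightarrow> E y (e y) \<and> E (e y) (\<sigma> y)"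
    and sig_ne: "\<And>y. y \<in> Y \<Longrightarrow> \<sigma> y \<noteq> y"
    and tri_sub: "\<And>x u. x \<in> X0 \<Longrightarrow> E x u \<Longrightarrow> u \<in> Y"
    and tri_card: "\<And>x. x \<in> X0 \<Longrightarrow> card {u. E x u} = 3"
    and tri_uniq: "\<And>y. y \<in> Y \<Longrightarrow> \<exists>!x. x \<in> X0 \<and> E x y"
    and S_tri: "\<And>x. x \<in> X0 \<Longrightarrow> card (S \<inter> {u. E x u}) = 1"
    and spr_sig: "\<And>y. y \<in> Y \<Longrightarrow> spr (\<sigma> y) = spr y"
    and spr_tri: "\<And>x u w. x \<in> X0 \<Longrightarrow> E x u \<Longrightarrow> E x w \<Longrightarrow> spr u = spr w"
    and spread: "\<And>y. y \<in> Y \<Longrightarrow> spr y \<Longrightarrow> y \<notin> S \<Longrightarrow> \<exists>i\<in>{1,2,3::nat}. (\<sigma>^^i) y \<in> S"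
    and indep: "\<And>y. y \<in> Y \<Longrightarrow> \<not> spr y \<Longrightarrow> y \<in> S \<Longrightarrow> \<sigma> y \<notin> S"
begin

definition sv where "sv x = (THE s. s \<in> S \<and> E x s)"
definition mS where "mS s = (LEAST m. 0 < m \<and> (\<sigma>^^m) s \<in> S)"
definition aa where "aa x = (SOME a. E x a \<and> a \<notin> S)"
definition bb where "bb x = (SOME b. E x b \<and> b \<notin> S \<and> b \<noteq> aa x)"
definition nn where "nn y = (if \<sigma> y \<in> S then 2 else (1::nat))"
definition LL where "LL x = (if spr (sv x) then x # segr \<sigma> e (mS (sv x)) (sv x)
   else rev (segr \<sigma> e (nn (aa x)) (aa x)) @ [x] @ segr \<sigma> e (nn (bb x)) (bb x))"
definition Ys where "Ys x = (if spr (sv x) then pts \<sigma> (mS (sv x)) (sv x)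
   else pts \<sigma> (nn (aa x)) (aa x) \<union> pts \<sigma> (nn (bb x)) (bb x))"

lemma sigY: "y \<in> Y \<Longrightarrow> \<sigma> y \<in> Y" using sig_bij bij_betwE by blast
lemma powY: "y \<in> Y \<Longrightarrow> (\<sigma>^^j) y \<in> Y" by (induction j) (auto simp: sigY)
lemma sig_inj: "inj_on \<sigma> Y" using sig_bij bij_betw_def by blast
lemma pow_cancel: "x \<in> Y \<Longrightarrow> y \<in> Y \<Longrightarrow> (\<sigma>^^j) x = (\<sigma>^^j) y \<Longrightarrow> x = y"
  by (induction j) (auto simp: powY dest: inj_onD[OF sig_inj])
lemma eX: "y \<in> Y \<Longrightarrow> e y \<in> X'" using e_bij bij_betwE by blast
lemma e_inj: "inj_on e Y" using e_bij bij_betw_def by blast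
lemma spr_pow: "y \<in> Y \<Longrightarrow> spr ((\<sigma>^^j) y) = spr y"
  by (induction j) (auto simp: spr_sig powY)
lemma pts_Y: "y \<in> Y \<Longrightarrow> pts \<sigma> n y \<subseteq> Y" unfolding pts_def using powY by auto

lemma pts_nn: "pts \<sigma> (nn z) z = (if \<sigma> z \<in> S then {z, \<sigma> z} else {z})"
  by (simp add: nn_def numeral_2_eq_2 pts_Suc pts_0)

lemma distinct_segr:
  "y \<in> Y \<Longrightarrow> (\<And>i j. i < j \<Longrightarrow> j < n \<Longrightarrow> (\<sigma>^^i) y \<noteq> (\<sigma>^^j) y) \<Longrightarrow> distinct (segr \<sigma> e n y)"
proof (induction n arbitrary: y)
  case 0 then show ?case by simp
next
  case (Suc n)
  have sy: "\<sigma> y \<in> Y" using Suc.prems(1) sigY by blast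
  have h: "i < j \<Longrightarrow> j < n \<Longrightarrow> (\<sigma>^^i) (\<sigma> y) \<noteq> (\<sigma>^^j) (\<sigma> y)" for i j
    using Suc.prems(2)[of "Suc i" "Suc j"] by (simp add: funpow_Suc_right del: funpow.simps)
  have IH: "distinct (segr \<sigma> e n (\<sigma> y))" using Suc.IH[OF sy h] by blast
  have y1: "y \<notin> pts \<sigma> n (\<sigma> y)"
  proof
    assume "y \<in> pts \<sigma> n (\<sigma> y)"
    then obtain j where j: "j < n" "y = (\<sigma>^^j) (\<sigma> y)" unfolding pts_def by auto
    have "(\<sigma>^^j) (\<sigma> y) = (\<sigma>^^(Suc j)) y" by (simp add: funpow_Suc_right del: funpow.simps)
    then have "(\<sigma>^^0) y = (\<sigma>^^(Suc j)) y" using j(2) by simp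
    then show False using Suc.prems(2)[of 0 "Suc j"] j(1) by blast
  qed
  have y2: "e y \<notin> e ` pts \<sigma> n (\<sigma> y)"
  proof
    assume "e y \<in> e ` pts \<sigma> n (\<sigma> y)"
    then obtain z where z: "z \<in> pts \<sigma> n (\<sigma> y)" "e y = e z" by blast
    have "z \<in> Y" using z(1) pts_Y[OF sy] by blast
    then have "y = z" using inj_onD[OF e_inj z(2)] Suc.prems(1) by blast
    then show False using y1 z(1) by blast
  qed
  have y3a: "y \<notin> e ` pts \<sigma> n (\<sigma> y)"
  proof
    assume "y \<in> e ` pts \<sigma> n (\<sigma> y)"
    then obtain z where z: "z \<in> pts \<sigma> n (\<sigma> y)" "y = e z" by blast
    have "z \<in> Y" using z(1) pts_Y[OF sy] by blast
    then show False using eX[of z] z(2) Suc.prems(1) d2 by blast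
  qed
  have y3b: "e y \<notin> pts \<sigma> n (\<sigma> y)"
    using pts_Y[OF sy] eX[OF Suc.prems(1)] d2 by blast
  have "e y \<notin> Y" using eX[OF Suc.prems(1)] d2 by blast
  then have "e y \<noteq> y" using Suc.prems(1) by auto
  then show ?case using IH y1 y2 y3a y3b by (simp add: set_segr)
qed

lemma nbr_fin: "x \<in> X0 \<Longrightarrow> finite {u. E x u}"
  using tri_card[of x] card.infinite[of "{u. E x u}"] by fastforce

lemma sv_char: "x \<in> X0 \<Longrightarrow> \<exists>s. s \<in> S \<and> E x s \<and> (\<forall>t. t \<in> S \<and> E x t \<longrightarrow> t = s)"
proof -
  assume x: "x \<in> X0"
  obtain s where s: "S \<inter> {u. E x u} = {s}" using S_tri[OF x] by (rule card_1_singletonE)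
  have "s \<in> S \<inter> {u. E x u}" using s by simp
  then have 1: "s \<in> S \<and> E x s" by simp
  have 2: "\<forall>t. t \<in> S \<and> E x t \<longrightarrow> t = s"
  proof (intro allI impI)
    fix t assume "t \<in> S \<and> E x t"
    then have "t \<in> S \<inter> {u. E x u}" by simp
    then show "t = s" using s by simp
  qed
  have 3: "s \<in> S" "E x s" using 1 by simp_all
  show ?thesis by (rule exI[of _ s]) (intro conjI 3 2)
qed

lemma sv_prop: "x \<in> X0 \<Longrightarrow> sv x \<in> S \<and> E x (sv x)"
proof -
  assume x: "x \<in> X0"
  obtain s where s1: "s \<in> S" and s2: "E x s" and s3: "\<forall>t. t \<in> S \<and> E x t \<longrightarrow> t = s"
    using sv_char[OF x] by blast
  have "sv x = s" unfolding sv_def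
  proof (rule the_equality)
    show "s \<in> S \<and> E x s" using s1 s2 by (rule conjI)
    show "\<And>t. t \<in> S \<and> E x t \<Longrightarrow> t = s" using s3 by (rule allE) (erule mp)
  qed
  then show ?thesis using s1 s2 by simp
qed

lemma sv_uniq: "x \<in> X0 \<Longrightarrow> s \<in> S \<Longrightarrow> E x s \<Longrightarrow> sv x = s"
proof -
  assume x: "x \<in> X0" "s \<in> S" "E x s"
  obtain s' where s1: "s' \<in> S" and s2: "E x s'" and s3: "\<forall>t. t \<in> S \<and> E x t \<longrightarrow> t = s'"
    using sv_char[OF x(1)] by blast
  have "sv x = s'" using s3[rule_format, OF sv_prop[OF x(1)]] .
  moreover have "s = s'" using s3[rule_format, of s] x by blast
  ultimately show ?thesis by simp
qed

lemma ab_prop: "x \<in> X0 \<Longrightarrow> E x (aa x) \<and> aa x \<notin> S \<and> E x (bb x) \<and> bb x \<notin> S \<and> aa x \<noteq> bb x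
   \<and> (\<forall>u. E x u \<longrightarrow> u \<in> S \<or> u = aa x \<or> u = bb x)"
proof -
  assume x: "x \<in> X0"
  have "card {u. E x u} = card ({u. E x u} \<inter> S) + card ({u. E x u} - S)"
    using card_Int_Diff[OF nbr_fin[OF x]] .
  then have "card ({u. E x u} - S) = 2" using tri_card[OF x] S_tri[OF x] by (simp add: Int_commute)
  then obtain u v where uv0: "{u. E x u} - S = {u, v}" "u \<noteq> v" by (auto simp: card_2_iff)
  have uv: "\<And>t. E x t \<and> t \<notin> S \<longleftrightarrow> t = u \<or> t = v" "u \<noteq> v" using uv0 by (auto simp: set_eq_iff)
  have a: "E x (aa x) \<and> aa x \<notin> S" unfolding aa_def
    by (rule someI[of _ u]) (use uv in blast)
  have b: "E x (bb x) \<and> bb x \<notin> S \<and> bb x \<noteq> aa x" unfolding bb_def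
  proof (rule someI_ex)
    have "aa x \<in> {u, v}" using a uv by blast
    then show "\<exists>b. E x b \<and> b \<notin> S \<and> b \<noteq> aa x" using uv by blast
  qed
  have "aa x = u \<or> aa x = v" "bb x = u \<or> bb x = v" using a b uv by blast+
  then have "\<forall>t. E x t \<longrightarrow> t \<in> S \<or> t = aa x \<or> t = bb x" using uv b by blast
  then show ?thesis using a b by metis
qed

lemma mS_prop:
  assumes s: "s \<in> S" "s \<in> Y" "spr s"
  shows "0 < mS s \<and> mS s \<le> 4 \<and> (\<sigma>^^mS s) s \<in> S \<and> (\<forall>j. 0 < j \<longrightarrow> j < mS s \<longrightarrow> (\<sigma>^^j) s \<notin> S)"
proof -
  have ex: "\<exists>m. 0 < m \<and> m \<le> 4 \<and> (\<sigma>^^m) s \<in> S"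
  proof (cases "\<sigma> s \<in> S")
    case True then show ?thesis by (intro exI[of _ 1]) simp
  next
    case False
    have "\<sigma> s \<in> Y" "spr (\<sigma> s)" using s sigY spr_sig by auto
    then obtain i where "i \<in> {1,2,3::nat}" "(\<sigma>^^i) (\<sigma> s) \<in> S" using spread False by blast
    then show ?thesis
      by (intro exI[of _ "Suc i"]) (auto simp: funpow_Suc_right simp del: funpow.simps)
  qed
  then obtain m where m: "0 < m" "m \<le> 4" "(\<sigma>^^m) s \<in> S" by blast
  have 1: "0 < mS s \<and> (\<sigma>^^mS s) s \<in> S" unfolding mS_def
    by (rule LeastI[of _ m]) (use m in blast)
  have 2: "mS s \<le> m" unfolding mS_def by (rule Least_le) (use m in blast)
  have 3: "(\<sigma>^^j) s \<notin> S" if "0 < j" "j < mS s" for j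
    using not_less_Least[of j "\<lambda>m. 0 < m \<and> (\<sigma>^^m) s \<in> S"] that unfolding mS_def by blast
  show ?thesis using 1 2 3 m by auto
qed

lemma pow_dist:
  assumes s: "s \<in> S" "s \<in> Y" "spr s" and ij: "i < j" "j < mS s"
  shows "(\<sigma>^^i) s \<noteq> (\<sigma>^^j) s"
proof
  assume eq: "(\<sigma>^^i) s = (\<sigma>^^j) s"
  have k: "(\<sigma>^^(i + k)) s = (\<sigma>^^i) ((\<sigma>^^k) s)" for k by (simp add: funpow_add)
  have "i + (j - i) = j" using ij by simp
  then have "(\<sigma>^^j) s = (\<sigma>^^i) ((\<sigma>^^(j-i)) s)" using k[of "j-i"] by simp
  then have "(\<sigma>^^i) s = (\<sigma>^^i) ((\<sigma>^^(j-i)) s)" using eq by simp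
  then have "s = (\<sigma>^^(j-i)) s" using pow_cancel[of s "(\<sigma>^^(j-i)) s" i] s powY by blast
  moreover have "(\<sigma>^^(j-i)) s \<notin> S" using mS_prop[OF s] ij by simp
  ultimately show False using s by simp
qed


lemma sv_Y: "x \<in> X0 \<Longrightarrow> sv x \<in> Y" using sv_prop tri_sub by blast

lemma pts_spr: "z \<in> Y \<Longrightarrow> y \<in> pts \<sigma> n z \<Longrightarrow> spr y = spr z"
  unfolding pts_def using spr_pow by auto

lemma ab_Y: "x \<in> X0 \<Longrightarrow> aa x \<in> Y \<and> bb x \<in> Y" using ab_prop tri_sub by blast

lemma Ys_sub: "x \<in> X0 \<Longrightarrow> Ys x \<subseteq> Y"
  unfolding Ys_def using pts_Y sv_Y ab_Y by auto

lemma Ys_spr: "x \<in> X0 \<Longrightarrow> y \<in> Ys x \<Longrightarrow> spr y = spr (sv x)"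
proof -
  assume x: "x \<in> X0" and y: "y \<in> Ys x"
  show ?thesis
  proof (cases "spr (sv x)")
    case True
    then have "y \<in> pts \<sigma> (mS (sv x)) (sv x)" using y unfolding Ys_def by simp
    then show ?thesis using pts_spr sv_Y[OF x] by blast
  next
    case False
    then have "y \<in> pts \<sigma> (nn (aa x)) (aa x) \<or> y \<in> pts \<sigma> (nn (bb x)) (bb x)" using y unfolding Ys_def by simp
    moreover have "spr (aa x) = spr (sv x)" "spr (bb x) = spr (sv x)"
      using spr_tri[OF x] ab_prop[OF x] sv_prop[OF x] by blast+
    ultimately show ?thesis using pts_spr ab_Y[OF x] by blast
  qed
qed

lemma set_LL: "x \<in> X0 \<Longrightarrow> set (LL x) = insert x (Ys x \<union> e ` Ys x)"
  unfolding LL_def Ys_def by (auto simp: set_segr)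

lemma disj_img: "A \<subseteq> Y \<Longrightarrow> B \<subseteq> Y \<Longrightarrow> A \<inter> B = {} \<Longrightarrow> (A \<union> e ` A) \<inter> (B \<union> e ` B) = {}"
proof -
  assume A: "A \<subseteq> Y" and B: "B \<subseteq> Y" and AB: "A \<inter> B = {}"
  have 1: "A \<inter> e ` B = {}" "e ` A \<inter> B = {}" using A B eX d2 by blast+
  have 2: "e ` A \<inter> e ` B = {}"
  proof (rule ccontr)
    assume "e ` A \<inter> e ` B \<noteq> {}"
    then obtain a b where ab: "a \<in> A" "b \<in> B" "e a = e b" by blast
    then have "a = b" using inj_onD[OF e_inj] A B by blast
    then show False using ab AB by blast
  qed
  show ?thesis using 1 2 AB by blast
qed

lemma LL_spread:
  assumes x: "x \<in> X0" and sp: "spr (sv x)"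
  shows "distinct (LL x) \<and> successively E (LL x) \<and> length (LL x) - 1 \<in> {2,4,6,8}
     \<and> hd (LL x) \<in> X0 \<union> X' \<and> last (LL x) \<in> X0 \<union> X'"
proof -
  define s where "s = sv x"
  define m where "m = mS s"
  have s: "s \<in> S" "s \<in> Y" "spr s" "E x s" using sv_prop[OF x] sv_Y[OF x] sp unfolding s_def by auto
  have m: "0 < m" "m \<le> 4" using mS_prop[OF s(1-3)] unfolding m_def by auto
  have L: "LL x = x # segr \<sigma> e m s" unfolding LL_def s_def m_def using sp by simp
  have d1': "distinct (segr \<sigma> e m s)"
    using distinct_segr[OF s(2)] pow_dist[OF s(1-3)] unfolding m_def by blast
  have xn: "x \<notin> set (segr \<sigma> e m s)"
  proof
    assume "x \<in> set (segr \<sigma> e m s)"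
    then have "x \<in> pts \<sigma> m s \<or> x \<in> e ` pts \<sigma> m s" by (simp add: set_segr)
    moreover have "pts \<sigma> m s \<subseteq> Y" using pts_Y[OF s(2)] .
    ultimately have "x \<in> Y \<or> x \<in> X'" using eX by blast
    then show False using x d1 d3 by blast
  qed
  have sc: "successively E (segr \<sigma> e m s)" using succ_segr[of s Y \<sigma> E e m] s(2) sigY eE by blast
  obtain m' where m': "m = Suc m'" using m by (cases m) auto
  have hd1: "hd (segr \<sigma> e m s) = s" using m'  by simp
  have sc2: "successively E (LL x)" unfolding L using sc hd1 s(4) m' by (simp add: successively_Cons)
  have len: "length (LL x) - 1 = 2 * m" unfolding L by (simp add: length_segr)
  have "m = 1 \<or> m = 2 \<or> m = 3 \<or> m = 4" using m by auto
  then have len2: "length (LL x) - 1 \<in> {2,4,6,8}" using len by auto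
  have ne: "segr \<sigma> e m s \<noteq> []" using m' by simp
  have "last (LL x) = last (segr \<sigma> e m s)" unfolding L using ne by simp
  also have "\<dots> = e ((\<sigma>^^(m-1)) s)" by (rule last_segr[OF m(1)])
  finally have "last (LL x) \<in> X'" using eX powY s(2) by simp
  then show ?thesis using d1' xn sc2 len2 x unfolding L by simp
qed

lemma nn_facts: "nn z = 1 \<or> nn z = 2" unfolding nn_def by simp

lemma distinct_segr_nn: "z \<in> Y \<Longrightarrow> distinct (segr \<sigma> e (nn z) z)"
proof (rule distinct_segr)
  fix i j assume z: "z \<in> Y" and ij: "i < j" "j < nn z"
  then have "i = 0" "j = 1" using nn_facts[of z] by auto
  then show "(\<sigma>^^i) z \<noteq> (\<sigma>^^j) z" using sig_ne[OF z] by simp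
qed

lemma LL_indep:
  assumes x: "x \<in> X0" and sp: "\<not> spr (sv x)"
  shows "distinct (LL x) \<and> successively E (LL x) \<and> length (LL x) - 1 \<in> {2,4,6,8}
     \<and> hd (LL x) \<in> X0 \<union> X' \<and> last (LL x) \<in> X0 \<union> X'"
proof -
  define a where "a = aa x"
  define b where "b = bb x"
  have ab: "E x a" "a \<notin> S" "E x b" "b \<notin> S" "a \<noteq> b" "a \<in> Y" "b \<in> Y"
    using ab_prop[OF x] ab_Y[OF x] unfolding a_def b_def by auto
  define A where "A = segr \<sigma> e (nn a) a"
  define B where "B = segr \<sigma> e (nn b) b"
  have L: "LL x = rev A @ [x] @ B" unfolding LL_def A_def B_def a_def b_def using sp by simp
  have dA: "distinct A" "distinct B" unfolding A_def B_def using distinct_segr_nn ab by auto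
  have pa: "pts \<sigma> (nn a) a \<subseteq> Y" "pts \<sigma> (nn b) b \<subseteq> Y" using pts_Y ab by auto
  have pab: "pts \<sigma> (nn a) a \<inter> pts \<sigma> (nn b) b = {}"
  proof -
    have "\<sigma> a \<noteq> \<sigma> b" using inj_onD[OF sig_inj, of a b] ab by auto
    moreover have "\<sigma> a \<in> S \<Longrightarrow> \<sigma> a \<noteq> b" "\<sigma> b \<in> S \<Longrightarrow> \<sigma> b \<noteq> a" using ab by auto
    ultimately show ?thesis unfolding pts_nn using ab by auto
  qed
  have sA: "set A = pts \<sigma> (nn a) a \<union> e ` pts \<sigma> (nn a) a" "set B = pts \<sigma> (nn b) b \<union> e ` pts \<sigma> (nn b) b"
    unfolding A_def B_def by (simp_all add: set_segr)
  have dAB: "set A \<inter> set B = {}" unfolding sA by (rule disj_img[OF pa pab])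
  have xA: "x \<notin> set A" "x \<notin> set B" unfolding sA using pa eX x d1 d3 by blast+
  have dist: "distinct (LL x)" unfolding L using dA dAB xA by auto
  have E': "successively (\<lambda>u v. E v u) A"
    unfolding A_def by (rule succ_segr[of a Y]) (use ab sigY eE Esym in auto)
  have sB: "successively E B" unfolding B_def by (rule succ_segr[of b Y]) (use ab sigY eE in auto)
  have nA: "A \<noteq> []" "B \<noteq> []" "hd A = a" "hd B = b" unfolding A_def B_def
    using nn_facts[of a] nn_facts[of b] by (auto simp: numeral_2_eq_2)
  have sc: "successively E (LL x)" unfolding L using E' sB nA ab Esym
    by (auto simp: successively_append_iff successively_Cons hd_rev last_rev)
  have len: "length (LL x) - 1 = 2 * nn a + 2 * nn b" unfolding L A_def B_def by (simp add: length_segr)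
  then have len2: "length (LL x) - 1 \<in> {2,4,6,8}" using nn_facts[of a] nn_facts[of b] by auto
  have lA: "last A \<in> X'" "last B \<in> X'" unfolding A_def B_def
    using last_segr[of "nn a" \<sigma> e a] last_segr[of "nn b" \<sigma> e b] nn_facts[of a] nn_facts[of b] eX powY ab sigY
    by auto
  have "hd (LL x) = last A" "last (LL x) = last B" unfolding L using nA by (simp_all add: hd_rev)
  then show ?thesis using dist sc len2 lA by simp
qed


lemma periodic: "y \<in> Y \<Longrightarrow> \<exists>p>0. (\<sigma>^^p) y = y"
proof -
  assume y: "y \<in> Y"
  define f where "f = (\<lambda>j. (\<sigma>^^j) y)"
  have fY: "f ` {..card Y} \<subseteq> Y" unfolding f_def using powY[OF y] by auto
  have "\<not> inj_on f {..card Y}"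
  proof
    assume "inj_on f {..card Y}"
    then have "card {..card Y} \<le> card Y" using card_inj_on_le[OF _ fY finY] by blast
    then show False by simp
  qed
  then obtain i j where ij: "i \<noteq> j" "f i = f j" unfolding inj_on_def by blast
  have main: "i < j \<Longrightarrow> f i = f j \<Longrightarrow> \<exists>p>0. (\<sigma>^^p) y = y" for i j
  proof -
    assume ij: "i < j" "f i = f j"
    have k: "(\<sigma>^^(i + k)) y = (\<sigma>^^i) ((\<sigma>^^k) y)" for k by (simp add: funpow_add)
    have "i + (j - i) = j" using ij by simp
    then have "(\<sigma>^^j) y = (\<sigma>^^i) ((\<sigma>^^(j-i)) y)" using k[of "j-i"] by simp
    then have "(\<sigma>^^i) y = (\<sigma>^^i) ((\<sigma>^^(j-i)) y)" using ij(2) unfolding f_def by simp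
    then have "y = (\<sigma>^^(j-i)) y" using pow_cancel[of y "(\<sigma>^^(j-i)) y" i] y powY by blast
    then show ?thesis using ij(1) by (intro exI[of _ "j - i"]) simp
  qed
  show ?thesis
  proof (cases "i < j")
    case True then show ?thesis using main ij by blast
  next
    case False then have "j < i" using ij(1) by simp
    then show ?thesis using main ij(2) by metis
  qed
qed

lemma pow_period: "(\<sigma>^^p) y = y \<Longrightarrow> (\<sigma>^^(p*k)) y = y"
proof (induction k)
  case 0 then show ?case by simp
next
  case (Suc k)
  have pk: "p * Suc k = p*k + p" by simp
  have "(\<sigma>^^(p * Suc k)) y = (\<sigma>^^(p*k)) ((\<sigma>^^p) y)" by (simp only: pk funpow_add o_apply)
  then show ?case using Suc by simp
qed

lemma backS: "y \<in> Y \<Longrightarrow> spr y \<Longrightarrow> \<exists>n s. s \<in> S \<and> s \<in> Y \<and> (\<sigma>^^n) s = y"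
proof -
  assume y: "y \<in> Y" and sp: "spr y"
  show ?thesis
  proof (cases "y \<in> S")
    case True then show ?thesis using y by (intro exI[of _ 0] exI[of _ y]) simp
  next
    case False
    then obtain k where k: "k \<in> {1,2,3::nat}" "(\<sigma>^^k) y \<in> S" using spread y sp by blast
    obtain p where p: "p > 0" "(\<sigma>^^p) y = y" using periodic[OF y] by blast
    have "(\<sigma>^^((p-1)*k)) ((\<sigma>^^k) y) = (\<sigma>^^((p-1)*k + k)) y" by (simp add: funpow_add)
    also have "(p-1)*k + k = p * k" using p(1) by (cases p) auto
    also have "(\<sigma>^^(p*k)) y = y" using pow_period p(2) by blast
    finally show ?thesis using k(2) powY[OF y] by blast
  qed
qed

lemma tri_eq: "y \<in> Y \<Longrightarrow> x1 \<in> X0 \<Longrightarrow> x2 \<in> X0 \<Longrightarrow> E x1 y \<Longrightarrow> E x2 y \<Longrightarrow> x1 = x2"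
proof -
  assume a: "y \<in> Y" "x1 \<in> X0" "x2 \<in> X0" "E x1 y" "E x2 y"
  from tri_uniq[OF a(1)] obtain x where x: "\<And>z. z \<in> X0 \<and> E z y \<Longrightarrow> z = x" by (elim ex1E) blast
  have "x1 = x" using x a by blast
  moreover have "x2 = x" using x a by blast
  ultimately show ?thesis by simp
qed

lemma tri_ex: "y \<in> Y \<Longrightarrow> \<exists>x. x \<in> X0 \<and> E x y" using tri_uniq by blast

lemma cover_spread: "y \<in> Y \<Longrightarrow> spr y \<Longrightarrow> \<exists>x\<in>X0. y \<in> Ys x"
proof -
  assume y: "y \<in> Y" and sp: "spr y"
  define P where "P = (\<lambda>n. \<exists>s. s \<in> S \<and> s \<in> Y \<and> (\<sigma>^^n) s = y)"
  define n where "n = (LEAST n. P n)"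
  have Pn: "P n" unfolding n_def using backS[OF y sp] P_def by (metis LeastI)
  then obtain s where s: "s \<in> S" "s \<in> Y" "(\<sigma>^^n) s = y" unfolding P_def by blast
  have sps: "spr s" using spr_pow[OF s(2), of n] s(3) sp by simp
  have ms: "0 < mS s \<and> (\<sigma>^^mS s) s \<in> S" using mS_prop[OF s(1,2) sps] by blast
  have lt: "n < mS s"
  proof (rule ccontr)
    assume "\<not> n < mS s"
    then have le: "mS s \<le> n" by simp
    have "(\<sigma>^^(n - mS s)) ((\<sigma>^^mS s) s) = (\<sigma>^^(n - mS s + mS s)) s" by (simp add: funpow_add)
    also have "n - mS s + mS s = n" using le by simp
    finally have "P (n - mS s)" unfolding P_def using ms s powY by metis
    moreover have "n - mS s < n" using ms le by simp
    ultimately show False using not_less_Least[of "n - mS s" P] unfolding n_def by blast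
  qed
  obtain x where x: "x \<in> X0" "E x s" using tri_ex[OF s(2)] by blast
  have sv: "sv x = s" using sv_uniq[OF x(1) s(1) x(2)] .
  have "y \<in> pts \<sigma> (mS s) s" unfolding pts_def using lt s(3) by blast
  then have "y \<in> Ys x" unfolding Ys_def sv using sps by simp
  then show ?thesis using x by blast
qed

lemma in_pts_nn: "z \<in> pts \<sigma> (nn z) z" "\<sigma> z \<in> S \<Longrightarrow> \<sigma> z \<in> pts \<sigma> (nn z) z"
  unfolding pts_nn by auto

lemma cover_indep: "y \<in> Y \<Longrightarrow> \<not> spr y \<Longrightarrow> \<exists>x\<in>X0. y \<in> Ys x"
proof -
  assume y: "y \<in> Y" and sp: "\<not> spr y"
  have mem: "z \<in> Y \<Longrightarrow> z \<notin> S \<Longrightarrow> \<not> spr z \<Longrightarrow> \<exists>x\<in>X0. \<not> spr (sv x) \<and> (z = aa x \<or> z = bb x)" for z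
  proof -
    assume z: "z \<in> Y" "z \<notin> S" "\<not> spr z"
    obtain x where x: "x \<in> X0" "E x z" using tri_ex[OF z(1)] by blast
    have "spr (sv x) = spr z" using spr_tri[OF x(1) _ x(2)] sv_prop[OF x(1)] by blast
    moreover have "z = aa x \<or> z = bb x" using ab_prop[OF x(1)] x(2) z(2) by blast
    ultimately show ?thesis using x z by blast
  qed
  show ?thesis
  proof (cases "y \<in> S")
    case False
    then obtain x where x: "x \<in> X0" "\<not> spr (sv x)" "y = aa x \<or> y = bb x" using mem y sp by blast
    then have "y \<in> Ys x" unfolding Ys_def using in_pts_nn(1) by auto
    then show ?thesis using x by blast
  next
    case True
    define z where "z = inv_into Y \<sigma> y"
    have z: "z \<in> Y" "\<sigma> z = y" unfolding z_def
      using inv_into_into[of y \<sigma> Y] bij_betw_inv_into_right[OF sig_bij y] sig_bij y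
      by (auto simp: bij_betw_def)
    have spz: "\<not> spr z" using spr_sig[OF z(1)] z(2) sp by simp
    have "z \<notin> S" using indep[OF z(1) spz] z(2) True by blast
    then obtain x where x: "x \<in> X0" "\<not> spr (sv x)" "z = aa x \<or> z = bb x" using mem z spz by blast
    have "y \<in> pts \<sigma> (nn z) z" using in_pts_nn(2)[of z] z(2) True by simp
    then have "y \<in> Ys x" unfolding Ys_def using x by auto
    then show ?thesis using x by blast
  qed
qed

lemma Ys_cover: "y \<in> Y \<Longrightarrow> \<exists>x\<in>X0. y \<in> Ys x"
  using cover_spread cover_indep by blast

lemma seg_uniq:
  assumes s1: "s1 \<in> S" "s1 \<in> Y" "spr s1" and s2: "s2 \<in> S" "s2 \<in> Y" "spr s2"
    and ij: "i \<le> j" "j < mS s2" and eq: "(\<sigma>^^i) s1 = (\<sigma>^^j) s2"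
  shows "s1 = s2"
proof -
  have k: "(\<sigma>^^(i + k)) s2 = (\<sigma>^^i) ((\<sigma>^^k) s2)" for k by (simp add: funpow_add)
  have "i + (j - i) = j" using ij by simp
  then have "(\<sigma>^^j) s2 = (\<sigma>^^i) ((\<sigma>^^(j-i)) s2)" using k[of "j-i"] by simp
  then have "s1 = (\<sigma>^^(j-i)) s2" using pow_cancel[of s1 "(\<sigma>^^(j-i)) s2" i] eq s1 s2 powY by metis
  moreover have "j - i = 0"
  proof (rule ccontr)
    assume "j - i \<noteq> 0"
    then have "(\<sigma>^^(j-i)) s2 \<notin> S" using mS_prop[OF s2] ij by simp
    then show False using s1 \<open>s1 = (\<sigma>^^(j-i)) s2\<close> by simp
  qed
  ultimately show ?thesis by simp
qed

lemma indep_mem: "x \<in> X0 \<Longrightarrow> \<not> spr (sv x) \<Longrightarrow> y \<in> Ys x \<Longrightarrow>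
    (y \<notin> S \<and> E x y) \<or> (y \<in> S \<and> (\<exists>z. E x z \<and> z \<in> Y \<and> \<sigma> z = y))"
proof -
  assume x: "x \<in> X0" and sp: "\<not> spr (sv x)" and y: "y \<in> Ys x"
  have ab: "E x (aa x)" "aa x \<notin> S" "E x (bb x)" "bb x \<notin> S" "aa x \<in> Y" "bb x \<in> Y"
    using ab_prop[OF x] ab_Y[OF x] by auto
  have "y \<in> pts \<sigma> (nn (aa x)) (aa x) \<or> y \<in> pts \<sigma> (nn (bb x)) (bb x)" using y sp unfolding Ys_def by simp
  then have "y = aa x \<or> y = bb x \<or> (\<sigma> (aa x) \<in> S \<and> y = \<sigma> (aa x)) \<or> (\<sigma> (bb x) \<in> S \<and> y = \<sigma> (bb x))"
    unfolding pts_nn by (auto split: if_splits)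
  then show ?thesis using ab by auto
qed

lemma Ys_uniq: "x1 \<in> X0 \<Longrightarrow> x2 \<in> X0 \<Longrightarrow> y \<in> Ys x1 \<Longrightarrow> y \<in> Ys x2 \<Longrightarrow> x1 = x2"
proof -
  assume x: "x1 \<in> X0" "x2 \<in> X0" and y: "y \<in> Ys x1" "y \<in> Ys x2"
  have yY: "y \<in> Y" using Ys_sub x y by blast
  have sp: "spr (sv x1) = spr y" "spr (sv x2) = spr y" using Ys_spr x y by auto
  show ?thesis
  proof (cases "spr y")
    case True
    define s1 where "s1 = sv x1"
    define s2 where "s2 = sv x2"
    have s1: "s1 \<in> S" "s1 \<in> Y" "spr s1" "E x1 s1" using sv_prop[OF x(1)] sv_Y[OF x(1)] sp True unfolding s1_def by auto
    have s2: "s2 \<in> S" "s2 \<in> Y" "spr s2" "E x2 s2" using sv_prop[OF x(2)] sv_Y[OF x(2)] sp True unfolding s2_def by auto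
    have "y \<in> pts \<sigma> (mS s1) s1" "y \<in> pts \<sigma> (mS s2) s2" using y sp True unfolding Ys_def s1_def s2_def by auto
    then obtain i j where ij0: "i < mS s1" "j < mS s2" "y = (\<sigma>^^i) s1" "y = (\<sigma>^^j) s2"
      unfolding pts_def by (auto elim!: imageE)
    then have ij: "i < mS s1" "j < mS s2" "(\<sigma>^^i) s1 = y" "(\<sigma>^^j) s2 = y" by simp_all
    have "s1 = s2"
    proof (cases "i \<le> j")
      case True then show ?thesis using seg_uniq[OF s1(1-3) s2(1-3) True ij(2)] ij by simp
    next
      case False then have "j \<le> i" by simp
      then show ?thesis using seg_uniq[OF s2(1-3) s1(1-3) _ ij(1)] ij by simp
    qed
    then show ?thesis using tri_eq[OF s1(2) x s1(4)] s2(4) by simp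
  next
    case False
    have m1: "(y \<notin> S \<and> E x1 y) \<or> (y \<in> S \<and> (\<exists>z. E x1 z \<and> z \<in> Y \<and> \<sigma> z = y))"
      using indep_mem[OF x(1) _ y(1)] sp False by simp
    have m2: "(y \<notin> S \<and> E x2 y) \<or> (y \<in> S \<and> (\<exists>z. E x2 z \<and> z \<in> Y \<and> \<sigma> z = y))"
      using indep_mem[OF x(2) _ y(2)] sp False by simp
    show ?thesis
    proof (cases "y \<in> S")
      case False then show ?thesis using m1 m2 tri_eq[OF yY x] by blast
    next
      case True
      then obtain z1 z2 where z: "E x1 z1" "z1 \<in> Y" "\<sigma> z1 = y" "E x2 z2" "z2 \<in> Y" "\<sigma> z2 = y"
        using m1 m2 by blast
      have "z1 = z2" using inj_onD[OF sig_inj, of z1 z2] z by simp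
      then show ?thesis using tri_eq[OF z(2) x z(1)] z(4) by simp
    qed
  qed
qed

theorem core_result: "\<exists>P. proper_path_factor (X0 \<union> X') Y E P"
proof
  show "proper_path_factor (X0 \<union> X') Y E (\<lambda>u w. \<exists>k\<in>X0. adj_in (LL k) u w)"
  proof (rule path_factor_from_lists)
    show "\<And>u v. E u v \<Longrightarrow> E v u" by (rule Esym)
    show "\<And>k. k \<in> X0 \<Longrightarrow> distinct (LL k)" using LL_spread LL_indep by blast
    show "\<And>k. k \<in> X0 \<Longrightarrow> successively E (LL k)" using LL_spread LL_indep by blast
    show "\<And>k. k \<in> X0 \<Longrightarrow> length (LL k) - 1 \<in> {2,4,6,8}" using LL_spread LL_indep by blast
    show "\<And>k. k \<in> X0 \<Longrightarrow> hd (LL k) \<in> X0 \<union> X'" using LL_spread LL_indep by blast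
    show "\<And>k. k \<in> X0 \<Longrightarrow> last (LL k) \<in> X0 \<union> X'" using LL_spread LL_indep by blast
  next
    fix k k' assume k: "k \<in> X0" "k' \<in> X0" "k \<noteq> k'"
    have Yd: "Ys k \<inter> Ys k' = {}" using Ys_uniq k by blast
    have 1: "(Ys k \<union> e ` Ys k) \<inter> (Ys k' \<union> e ` Ys k') = {}"
      by (rule disj_img[OF Ys_sub[OF k(1)] Ys_sub[OF k(2)] Yd])
    have 2: "k \<notin> Ys k' \<union> e ` Ys k'" "k' \<notin> Ys k \<union> e ` Ys k"
      using Ys_sub k eX d1 d3 by blast+
    show "set (LL k) \<inter> set (LL k') = {}" unfolding set_LL[OF k(1)] set_LL[OF k(2)]
      using 1 2 k(3) by blast
  next
    fix v assume v: "v \<in> X0 \<union> X' \<union> Y"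
    show "\<exists>k\<in>X0. v \<in> set (LL k)"
    proof (cases "v \<in> X0")
      case True then show ?thesis using set_LL by blast
    next
      case False
      then have "v \<in> Y \<or> v \<in> X'" using v by blast
      then obtain y where y: "y \<in> Y" "v = y \<or> v = e y"
        using e_bij unfolding bij_betw_def by blast
      obtain k where k: "k \<in> X0" "y \<in> Ys k" using Ys_cover[OF y(1)] by blast
      then show ?thesis using y(2) set_LL[OF k(1)] by blast
    qed
  qed
qed

end


locale setupL =
  fixes X Y VH S :: "'a set" and E EH :: "'a \<Rightarrow> 'a \<Rightarrow> bool" and c :: "'a \<Rightarrow> 'a \<Rightarrow> nat"
  assumes big: "bigraph34 X Y E"
    and full: "full_3reg_subgraph X Y E VH EH"
    and col: "proper_3_edge_colouring EH c"
    and mixed: "mixed_transversal Y (nbrs E ` (X - VH)) (X \<inter> VH)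
           (\<lambda>x. {y. EH x y \<and> c x y \<in> {1,2}}) S"
begin

lemma finX: "finite X" and finY: "finite Y" and XY: "X \<inter> Y = {}"
  and Esym: "E u v \<Longrightarrow> E v u" and Ebip: "E u v \<Longrightarrow> (u \<in> X \<and> v \<in> Y) \<or> (u \<in> Y \<and> v \<in> X)"
  and degX: "x \<in> X \<Longrightarrow> card (nbrs E x) = 3" and degY: "y \<in> Y \<Longrightarrow> card (nbrs E y) = 4"
  using big unfolding bigraph34_def simple_graph_def by blast+

lemma VH_sub: "VH \<subseteq> X \<union> Y" and EH_E: "EH u v \<Longrightarrow> E u v" and EHsym: "EH u v \<Longrightarrow> EH v u"
  and EH_VH: "EH u v \<Longrightarrow> u \<in> VH \<and> v \<in> VH" and degH: "v \<in> VH \<Longrightarrow> card (nbrs EH v) = 3"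
  and full4: "v \<in> X \<union> Y \<Longrightarrow> card (nbrs E v) = 4 \<Longrightarrow> v \<in> VH"
  using full unfolding full_3reg_subgraph_def by blast+

lemma col1: "EH u v \<Longrightarrow> c u v \<in> {1,2,3} \<and> c u v = c v u"
  and col2: "EH v u \<Longrightarrow> EH v w \<Longrightarrow> u \<noteq> w \<Longrightarrow> c v u \<noteq> c v w"
  using col unfolding proper_3_edge_colouring_def by blast+

lemma Y_VH: "y \<in> Y \<Longrightarrow> y \<in> VH" using full4 degY by blast

lemma finN: "v \<in> X \<union> Y \<Longrightarrow> finite (nbrs E v)"
  using degX degY by (metis Un_iff card.infinite zero_neq_numeral)

lemma finNH: "v \<in> VH \<Longrightarrow> finite (nbrs EH v)"
  using degH by (metis card.infinite zero_neq_numeral)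

lemma NH_sub: "nbrs EH v \<subseteq> nbrs E v" unfolding nbrs_def using EH_E by blast

lemma NH_eq: "x \<in> X \<inter> VH \<Longrightarrow> nbrs EH x = nbrs E x"
proof -
  assume x: "x \<in> X \<inter> VH"
  have "card (nbrs EH x) = card (nbrs E x)" using degH degX x by simp
  then show ?thesis using card_subset_eq[OF finN NH_sub] x by blast
qed

lemma colour_ex1: "v \<in> VH \<Longrightarrow> k \<in> {1,2,3} \<Longrightarrow> \<exists>u. EH v u \<and> c v u = k"
proof -
  assume v: "v \<in> VH" and k: "k \<in> {1,2,3}"
  have cv: "\<And>u. EH v u \<Longrightarrow> c v u \<in> {1,2,3}" using col1 by blast
  have sub: "c v ` nbrs EH v \<subseteq> {1,2,3}" unfolding nbrs_def using cv by blast
  have inj: "inj_on (c v) (nbrs EH v)" unfolding inj_on_def nbrs_def using col2 by blast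
  have "card (c v ` nbrs EH v) = 3" using card_image[OF inj] degH[OF v] by simp
  then have "c v ` nbrs EH v = {1,2,3}" using card_subset_eq[OF _ sub] by simp
  then have "k \<in> c v ` nbrs EH v" using k by simp
  then obtain u where "u \<in> nbrs EH v" "k = c v u" by (rule imageE)
  then show ?thesis unfolding nbrs_def by auto
qed

definition nb where "nb v k = (THE u. EH v u \<and> c v u = k)"

lemma nb_prop: "v \<in> VH \<Longrightarrow> k \<in> {1,2,3} \<Longrightarrow> EH v (nb v k) \<and> c v (nb v k) = k"
proof -
  assume v: "v \<in> VH" and k: "k \<in> {1,2,3}"
  obtain u where u: "EH v u" "c v u = k" using colour_ex1[OF v k] by blast
  have "\<exists>!u. EH v u \<and> c v u = k"
  proof (rule ex1I[of _ u])
    show "EH v u \<and> c v u = k" using u by simp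
    show "\<And>w. EH v w \<and> c v w = k \<Longrightarrow> w = u" using col2[of v _ u] u by metis
  qed
  then show ?thesis unfolding nb_def by (rule theI')
qed

lemma nb_eq: "EH v u \<Longrightarrow> nb v (c v u) = u"
proof -
  assume vu: "EH v u"
  have v: "v \<in> VH" using EH_VH vu by blast
  have k: "c v u \<in> {1,2,3}" using col1 vu by blast
  have "EH v (nb v (c v u)) \<and> c v (nb v (c v u)) = c v u" using nb_prop[OF v k] .
  then show ?thesis using col2[of v "nb v (c v u)" u] vu by metis
qed


definition "II = X \<inter> VH"
definition "en = (\<lambda>x. {y. EH x y \<and> c x y \<in> {1,2}})"
definition "TT = nbrs E ` (X - VH)"
definition "R = Fstar_adj TT II en"
definition "cmp = Fstar_component TT II en"

lemma nb_back: "v \<in> VH \<Longrightarrow> k \<in> {1,2,3} \<Longrightarrow> nb (nb v k) k = v"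
proof -
  assume v: "v \<in> VH" and k: "k \<in> {1,2,3}"
  have u: "EH v (nb v k)" "c v (nb v k) = k" using nb_prop[OF v k] by auto
  have "EH (nb v k) v" using EHsym u(1) .
  moreover have "c (nb v k) v = k" using col1[OF u(1)] u(2) by simp
  ultimately show ?thesis using nb_eq by metis
qed

lemma nb_side: "k \<in> {1,2,3} \<Longrightarrow> (y \<in> Y \<longrightarrow> nb y k \<in> II) \<and> (x \<in> II \<longrightarrow> nb x k \<in> Y)"
proof (intro conjI impI)
  assume k: "k \<in> {1,2,3}"
  {
    assume y: "y \<in> Y"
    have h: "EH y (nb y k)" using nb_prop[OF Y_VH[OF y] k] by simp
    then have "nb y k \<in> VH" using EH_VH by blast
    moreover have "nb y k \<in> X" using Ebip[OF EH_E[OF h]] y XY by blast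
    ultimately show "nb y k \<in> II" unfolding II_def by blast
  }
  {
    assume x: "x \<in> II"
    have h: "EH x (nb x k)" using nb_prop[of x k] x k unfolding II_def by simp
    show "nb x k \<in> Y" using Ebip[OF EH_E[OF h]] x XY unfolding II_def by blast
  }
qed

lemma en_eq: "x \<in> II \<Longrightarrow> en x = {nb x 1, nb x 2} \<and> nb x 1 \<noteq> nb x 2 \<and> en x \<subseteq> Y"
proof -
  assume x: "x \<in> II"
  have xV: "x \<in> VH" using x unfolding II_def by blast
  have p1: "EH x (nb x 1)" "c x (nb x 1) = 1" using nb_prop[OF xV, of 1] by auto
  have p2: "EH x (nb x 2)" "c x (nb x 2) = 2" using nb_prop[OF xV, of 2] by auto
  have sub: "en x \<subseteq> {nb x 1, nb x 2}"
  proof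
    fix u assume "u \<in> en x"
    then have u: "EH x u" "c x u = 1 \<or> c x u = 2" unfolding en_def by auto
    then show "u \<in> {nb x 1, nb x 2}" using nb_eq[OF u(1)] by auto
  qed
  have "{nb x 1, nb x 2} \<subseteq> en x" unfolding en_def using p1 p2 by auto
  moreover have "nb x 1 \<noteq> nb x 2" using p1 p2 by auto
  moreover have "{nb x 1, nb x 2} \<subseteq> Y" using nb_side[of 1 _ x] nb_side[of 2 _ x] x by simp
  ultimately show ?thesis using sub by blast
qed

definition "e0 y = nb y 1"
definition "s0 y = nb (nb y 1) 2"

definition Cd where "Cd d ed \<longleftrightarrow> bij_betw d Y Y \<and> bij_betw ed Y II \<and> (\<forall>v\<in>Y. en (ed v) = {v, d v})"

lemma Cd0: "Cd s0 e0"
proof -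
  have A: "y \<in> Y \<Longrightarrow> nb y 1 \<in> II \<and> nb (nb y 1) 1 = y" for y
    using nb_side[of 1 y] nb_back[OF Y_VH, of y 1] by simp
  have B: "x \<in> II \<Longrightarrow> nb x k \<in> Y \<and> nb (nb x k) k = x" if "k \<in> {1,2,3}" for x k
    using nb_side[OF that, of _ x] nb_back[OF _ that, of x] unfolding II_def by simp
  have b1: "bij_betw e0 Y II"
    by (rule bij_betw_byWitness[where f'="\<lambda>x. nb x 1"]) (use A B[of 1] in \<open>auto simp: e0_def\<close>)
  have b2: "bij_betw s0 Y Y"
  proof (rule bij_betw_byWitness[where f'="\<lambda>w. nb (nb w 2) 1"])
    show "\<forall>a\<in>Y. nb (nb (s0 a) 2) 1 = a" using A B[of 2] unfolding s0_def by auto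
    show "\<forall>a\<in>Y. s0 (nb (nb a 2) 1) = a"
    proof
      fix a assume a: "a \<in> Y"
      define x where "x = nb a 2"
      have x: "x \<in> II" using nb_side[of 2 a] a unfolding x_def by simp
      have "nb (nb x 1) 1 = x" using B[of 1 x] x by simp
      then have "s0 (nb x 1) = nb x 2" unfolding s0_def by simp
      also have "nb x 2 = a" unfolding x_def using nb_back[OF Y_VH[OF a], of 2] by simp
      finally show "s0 (nb (nb a 2) 1) = a" unfolding x_def .
    qed
    show "s0 ` Y \<subseteq> Y" using A B[of 2] unfolding s0_def by auto
    show "(\<lambda>w. nb (nb w 2) 1) ` Y \<subseteq> Y" using B[of 1] nb_side[of 2] by auto
  qed
  have b3: "\<forall>v\<in>Y. en (e0 v) = {v, s0 v}" using A en_eq unfolding e0_def s0_def by auto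
  show ?thesis unfolding Cd_def using b1 b2 b3 by blast
qed


lemma tri_sub: "x \<in> X - VH \<Longrightarrow> E x u \<Longrightarrow> u \<in> Y"
  using Ebip XY by blast

lemma tri_card: "x \<in> X - VH \<Longrightarrow> card {u. E x u} = 3"
  using degX unfolding nbrs_def by blast

lemma tri_uniq: "y \<in> Y \<Longrightarrow> \<exists>!x. x \<in> X - VH \<and> E x y"
proof -
  assume y: "y \<in> Y"
  define D where "D = nbrs E y - nbrs EH y"
  have fin: "finite (nbrs E y)" using finN y by blast
  have "card D = card (nbrs E y) - card (nbrs EH y)" unfolding D_def
    using card_Diff_subset[OF finite_subset[OF NH_sub fin] NH_sub] .
  then have "card D = 1" using degY[OF y] degH[OF Y_VH[OF y]] by simp
  then obtain x0 where D: "D = {x0}" by (rule card_1_singletonE)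
  have x0: "E y x0" "\<not> EH y x0" using D unfolding D_def nbrs_def by auto
  have x0X: "x0 \<in> X" using Ebip[OF x0(1)] y XY by blast
  have x0V: "x0 \<notin> VH"
  proof
    assume "x0 \<in> VH"
    then have "nbrs EH x0 = nbrs E x0" using NH_eq x0X by blast
    moreover have "y \<in> nbrs E x0" using Esym[OF x0(1)] unfolding nbrs_def by simp
    ultimately have "EH x0 y" unfolding nbrs_def by blast
    then show False using EHsym x0(2) by blast
  qed
  show ?thesis
  proof (rule ex1I[of _ x0])
    show "x0 \<in> X - VH \<and> E x0 y" using x0X x0V Esym[OF x0(1)] by blast
  next
    fix x assume x: "x \<in> X - VH \<and> E x y"
    have "\<not> EH y x" using x EH_VH by blast
    then have "x \<in> D" unfolding D_def nbrs_def using x Esym by blast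
    then show "x = x0" using D by simp
  qed
qed

lemma trans_S: "transversal TT S" using mixed unfolding mixed_transversal_def TT_def II_def en_def by blast

lemma S_tri: "x \<in> X - VH \<Longrightarrow> card (S \<inter> {u. E x u}) = 1"
  using trans_S unfolding transversal_def TT_def nbrs_def by blast

lemma Rsym: "R u v \<Longrightarrow> R v u"
  unfolding R_def Fstar_adj_def mg_adj_def by (auto simp: insert_commute)

lemma R_Y: "R u v \<Longrightarrow> u \<in> Y \<and> v \<in> Y"
proof -
  assume "R u v"
  then consider (a) "mg_adj II en u v" | (b) "\<exists>T\<in>TT. u \<in> T \<and> v \<in> T"
    unfolding R_def Fstar_adj_def by blast
  then show ?thesis
  proof cases
    case a
    then obtain x where "x \<in> II" "en x = {u, v}" unfolding mg_adj_def by blast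
    then show ?thesis using en_eq by blast
  next
    case b
    then obtain x where "x \<in> X - VH" "u \<in> nbrs E x" "v \<in> nbrs E x" unfolding TT_def by blast
    then show ?thesis using tri_sub unfolding nbrs_def by blast
  qed
qed

lemma R_rev: "R\<^sup>*\<^sup>* u v \<Longrightarrow> R\<^sup>*\<^sup>* v u"
proof (induction rule: rtranclp_induct)
  case base then show ?case by simp
next
  case (step y z)
  then show ?case using Rsym by (meson converse_rtranclp_into_rtranclp)
qed

lemma cmp_eq: "R\<^sup>*\<^sup>* u v \<Longrightarrow> cmp u = cmp v"
proof -
  assume uv: "R\<^sup>*\<^sup>* u v"
  have "cmp u = {w. R\<^sup>*\<^sup>* u w}" "cmp v = {w. R\<^sup>*\<^sup>* v w}" unfolding cmp_def Fstar_component_def R_def by simp_all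
  moreover have "R\<^sup>*\<^sup>* u w \<longleftrightarrow> R\<^sup>*\<^sup>* v w" for w
    using uv R_rev rtranclp_trans by metis
  ultimately show ?thesis by simp
qed

lemma cmp_mem: "w \<in> cmp u \<longleftrightarrow> R\<^sup>*\<^sup>* u w" unfolding cmp_def Fstar_component_def R_def by simp

lemma cmp_Y: "y \<in> Y \<Longrightarrow> cmp y \<subseteq> Y"
proof
  fix u assume y: "y \<in> Y" and "u \<in> cmp y"
  then have "R\<^sup>*\<^sup>* y u" using cmp_mem by blast
  then show "u \<in> Y" using y by (induction rule: rtranclp_induct) (auto dest: R_Y)
qed

lemma Cd_facts: "Cd d ed \<Longrightarrow> v \<in> Y \<Longrightarrow> d v \<in> Y \<and> ed v \<in> II \<and> en (ed v) = {v, d v} \<and> v \<noteq> d v \<and> R v (d v)"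
proof -
  assume C: "Cd d ed" and v: "v \<in> Y"
  have 1: "d v \<in> Y" "ed v \<in> II" "en (ed v) = {v, d v}"
    using C v unfolding Cd_def by (auto dest: bij_betwE)
  have 2: "v \<noteq> d v"
  proof
    assume "v = d v"
    then have "en (ed v) = {v}" using 1 by simp
    then show False using en_eq[OF 1(2)] by auto
  qed
  have "mg_adj II en v (d v)" unfolding mg_adj_def using 1 2 by blast
  then have "R v (d v)" unfolding R_def Fstar_adj_def by blast
  then show ?thesis using 1 2 by blast
qed

definition Mc where "Mc C \<longleftrightarrow> (\<exists>\<sigma>'. cycle_direction Y II en \<sigma>' \<and> spread_on \<sigma>' C S)"
definition DD where "DD C = (if Mc C then (SOME \<sigma>'. cycle_direction Y II en \<sigma>' \<and> spread_on \<sigma>' C S) else s0)"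
definition EE where "EE C = (if Mc C then (SOME e'. bij_betw e' Y II \<and> (\<forall>v\<in>Y. en (e' v) = {v, DD C v})) else e0)"

lemma DD_prop: "Cd (DD C) (EE C) \<and> (Mc C \<longrightarrow> spread_on (DD C) C S)"
proof (cases "Mc C")
  case False then show ?thesis using Cd0 unfolding DD_def EE_def by simp
next
  case True
  have 1: "cycle_direction Y II en (DD C) \<and> spread_on (DD C) C S"
    unfolding DD_def using True someI_ex[of "\<lambda>\<sigma>'. cycle_direction Y II en \<sigma>' \<and> spread_on \<sigma>' C S"]
    unfolding Mc_def by simp
  then have 2: "\<exists>e'. bij_betw e' Y II \<and> (\<forall>v\<in>Y. en (e' v) = {v, DD C v})" unfolding cycle_direction_def by blast
  have 3: "bij_betw (EE C) Y II \<and> (\<forall>v\<in>Y. en (EE C v) = {v, DD C v})"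
    unfolding EE_def using True someI_ex[OF 2] by simp
  show ?thesis using 1 3 True unfolding Cd_def cycle_direction_def by blast
qed

definition "sig y = DD (cmp y) y"
definition "ee y = EE (cmp y) y"
definition "spr y = Mc (cmp y)"

lemma sig_facts: "y \<in> Y \<Longrightarrow> sig y \<in> Y \<and> ee y \<in> II \<and> en (ee y) = {y, sig y} \<and> y \<noteq> sig y \<and> R y (sig y) \<and> cmp (sig y) = cmp y"
proof -
  assume y: "y \<in> Y"
  have "DD (cmp y) y \<in> Y \<and> EE (cmp y) y \<in> II \<and> en (EE (cmp y) y) = {y, DD (cmp y) y} \<and> y \<noteq> DD (cmp y) y \<and> R y (DD (cmp y) y)"
    using Cd_facts[OF conjunct1[OF DD_prop] y] .
  then show ?thesis unfolding sig_def ee_def using cmp_eq by (metis r_into_rtranclp)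
qed


lemma DD_bij: "bij_betw (DD C) Y Y" "bij_betw (EE C) Y II"
  using DD_prop unfolding Cd_def by blast+

lemma sig_bij: "bij_betw sig Y Y"
  unfolding bij_betw_def
proof
  show "inj_on sig Y"
  proof (rule inj_onI)
    fix y1 y2 assume y: "y1 \<in> Y" "y2 \<in> Y" "sig y1 = sig y2"
    have "cmp (sig y1) = cmp y1" "cmp (sig y2) = cmp y2" using sig_facts y(1,2) by blast+
    then have "cmp y1 = cmp y2" using y(3) by simp
    then have "DD (cmp y1) y1 = DD (cmp y1) y2" using y(3) unfolding sig_def by simp
    then show "y1 = y2" using inj_onD[OF bij_betw_imp_inj_on[OF DD_bij(1)[of "cmp y1"]]] y(1,2) by blast
  qed
  show "sig ` Y = Y"
  proof
    show "sig ` Y \<subseteq> Y" using sig_facts by (auto simp del: )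
    show "Y \<subseteq> sig ` Y"
    proof
      fix z assume z: "z \<in> Y"
      define d where "d = DD (cmp z)"
      have "d ` Y = Y" using DD_bij(1)[of "cmp z"] unfolding d_def bij_betw_def by blast
      then have "z \<in> d ` Y" using z by simp
      then obtain w where w0: "w \<in> Y" "z = d w" by (rule imageE)
      then have w: "w \<in> Y" "d w = z" by simp_all
      have "R w (d w)" using Cd_facts[OF conjunct1[OF DD_prop] w(1)] unfolding d_def by blast
      then have "R\<^sup>*\<^sup>* w z" using w(2) by simp
      then have "cmp w = cmp z" using cmp_eq by simp
      then have "sig w = z" unfolding sig_def using w(2) d_def by simp
      then show "z \<in> sig ` Y" using w(1) by blast
    qed
  qed
qed

lemma ee_bij: "bij_betw ee Y II"
  unfolding bij_betw_def
proof
  show "inj_on ee Y"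
  proof (rule inj_onI)
    fix y1 y2 assume y: "y1 \<in> Y" "y2 \<in> Y" "ee y1 = ee y2"
    have "en (ee y1) = {y1, sig y1}" "en (ee y2) = {y2, sig y2}" using sig_facts y(1,2) by blast+
    then have "{y1, sig y1} = {y2, sig y2}" using y(3) by simp
    then have "y2 \<in> {y1, sig y1}" by simp
    then have "y2 = y1 \<or> y2 = sig y1" by simp
    then have "cmp y1 = cmp y2" using sig_facts[OF y(1)] by auto
    then have "EE (cmp y1) y1 = EE (cmp y1) y2" using y(3) unfolding ee_def by simp
    then show "y1 = y2" using inj_onD[OF bij_betw_imp_inj_on[OF DD_bij(2)[of "cmp y1"]]] y(1,2) by blast
  qed
  show "ee ` Y = II"
  proof
    show "ee ` Y \<subseteq> II" using sig_facts by auto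
    show "II \<subseteq> ee ` Y"
    proof
      fix x assume x: "x \<in> II"
      define w where "w = nb x 1"
      have wx: "w \<in> en x" "w \<in> Y" using en_eq[OF x] unfolding w_def by auto
      have "EE (cmp w) ` Y = II" using DD_bij(2)[of "cmp w"] unfolding bij_betw_def by blast
      then have "x \<in> EE (cmp w) ` Y" using x by simp
      then obtain z where z0: "z \<in> Y" "x = EE (cmp w) z" by (rule imageE)
      then have z: "z \<in> Y" "EE (cmp w) z = x" by simp_all
      have f: "en (EE (cmp w) z) = {z, DD (cmp w) z}" "R z (DD (cmp w) z)"
        using Cd_facts[OF conjunct1[OF DD_prop] z(1)] by blast+
      have "w = z \<or> w = DD (cmp w) z" using f(1) z(2) wx(1) by blast
      moreover have "cmp (DD (cmp w) z) = cmp z" using cmp_eq[OF r_into_rtranclp[where r=R, OF f(2)]] by simp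
      ultimately have "cmp w = cmp z" by auto
      then have "ee z = x" unfolding ee_def using z(2) by simp
      then show "x \<in> ee ` Y" using z(1) by blast
    qed
  qed
qed

lemma sig_pow:
  assumes y: "y \<in> Y"
  shows "(sig^^i) y = (DD (cmp y)^^i) y \<and> (DD (cmp y)^^i) y \<in> cmp y"
proof (induction i)
  case 0 then show ?case using cmp_mem by simp
next
  case (Suc i)
  define w where "w = (DD (cmp y)^^i) y"
  have wc: "w \<in> cmp y" using Suc w_def by simp
  have wY: "w \<in> Y" using cmp_Y[OF y] wc by blast
  have "R\<^sup>*\<^sup>* y w" using wc cmp_mem by blast
  then have cw: "cmp w = cmp y" using cmp_eq by simp
  have "(sig^^Suc i) y = sig w" using Suc w_def by simp
  also have "\<dots> = DD (cmp y) w" unfolding sig_def cw ..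
  finally have 1: "(sig^^Suc i) y = (DD (cmp y)^^Suc i) y" unfolding w_def by simp
  have "R w (DD (cmp y) w)" using Cd_facts[OF conjunct1[OF DD_prop] wY] by blast
  then have "DD (cmp y) w \<in> cmp y" using wc cmp_mem by (meson rtranclp.rtrancl_into_rtrancl)
  then show ?case using 1 w_def by simp
qed

lemma core_inst: "core (X - VH) Y II E sig ee S spr"
proof
  show "finite Y" by (rule finY)
  show "(X - VH) \<inter> Y = {}" "II \<inter> Y = {}" "(X - VH) \<inter> II = {}" using XY unfolding II_def by blast+
  show "\<And>u v. E u v \<Longrightarrow> E v u" by (rule Esym)
  show "bij_betw sig Y Y" by (rule sig_bij)
  show "bij_betw ee Y II" by (rule ee_bij)
  show "\<And>y. y \<in> Y \<Longrightarrow> E y (ee y) \<and> E (ee y) (sig y)"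
  proof -
    fix y assume y: "y \<in> Y"
    have "y \<in> en (ee y)" "sig y \<in> en (ee y)" using sig_facts[OF y] by auto
    then have "EH (ee y) y" "EH (ee y) (sig y)" unfolding en_def by auto
    then show "E y (ee y) \<and> E (ee y) (sig y)" using EH_E Esym by blast
  qed
  show "\<And>y. y \<in> Y \<Longrightarrow> sig y \<noteq> y"
  proof -
    fix y assume "y \<in> Y"
    then have "y \<noteq> sig y" using sig_facts by blast
    then show "sig y \<noteq> y" by simp
  qed
  show "\<And>x u. x \<in> X - VH \<Longrightarrow> E x u \<Longrightarrow> u \<in> Y" by (rule tri_sub)
  show "\<And>x. x \<in> X - VH \<Longrightarrow> card {u. E x u} = 3" by (rule tri_card)
  show "\<And>y. y \<in> Y \<Longrightarrow> \<exists>!x. x \<in> X - VH \<and> E x y" by (rule tri_uniq)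
  show "\<And>x. x \<in> X - VH \<Longrightarrow> card (S \<inter> {u. E x u}) = 1" by (rule S_tri)
  show "\<And>y. y \<in> Y \<Longrightarrow> spr (sig y) = spr y"
  proof -
    fix y assume "y \<in> Y"
    then have "cmp (sig y) = cmp y" using sig_facts by blast
    then show "spr (sig y) = spr y" unfolding spr_def by simp
  qed
  show "\<And>x u w. x \<in> X - VH \<Longrightarrow> E x u \<Longrightarrow> E x w \<Longrightarrow> spr u = spr w"
  proof -
    fix x u w assume x: "x \<in> X - VH" "E x u" "E x w"
    show "spr u = spr w"
    proof (cases "u = w")
      case False
      have "nbrs E x \<in> TT" "u \<in> nbrs E x" "w \<in> nbrs E x" using x unfolding TT_def nbrs_def by auto
      then have "R u w" unfolding R_def Fstar_adj_def using False by blast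
      then have "cmp u = cmp w" using cmp_eq[OF r_into_rtranclp] by blast
      then show ?thesis unfolding spr_def by simp
    qed simp
  qed
  show "\<And>y. y \<in> Y \<Longrightarrow> spr y \<Longrightarrow> y \<notin> S \<Longrightarrow> \<exists>i\<in>{1,2,3::nat}. (sig^^i) y \<in> S"
  proof -
    fix y assume y: "y \<in> Y" "spr y" "y \<notin> S"
    have "spread_on (DD (cmp y)) (cmp y) S" using DD_prop y(2) unfolding spr_def by blast
    moreover have "y \<in> cmp y - S" using y cmp_mem by simp
    ultimately obtain i where i: "i \<in> {1,2,3::nat}" "(DD (cmp y)^^i) y \<in> S" unfolding spread_on_def by blast
    then show "\<exists>i\<in>{1,2,3::nat}. (sig^^i) y \<in> S" using sig_pow[OF y(1), of i] by auto
  qed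
  show "\<And>y. y \<in> Y \<Longrightarrow> \<not> spr y \<Longrightarrow> y \<in> S \<Longrightarrow> sig y \<notin> S"
  proof -
    fix y assume y: "y \<in> Y" "\<not> spr y" "y \<in> S"
    have m: "mixed_transversal Y TT II en S" using mixed unfolding TT_def II_def en_def .
    have "independent_in II en (S \<inter> Fstar_component TT II en y) \<or> (\<exists>\<sigma>. cycle_direction Y II en \<sigma> \<and> spread_on \<sigma> (Fstar_component TT II en y) S)"
      using m y(1) unfolding mixed_transversal_def Let_def by blast
    then have "independent_in II en (S \<inter> cmp y) \<or> Mc (cmp y)" unfolding Mc_def cmp_def .
    then have ind: "independent_in II en (S \<inter> cmp y)" using y(2) unfolding spr_def by blast
    show "sig y \<notin> S"
    proof
      assume s: "sig y \<in> S"
      have f: "ee y \<in> II" "en (ee y) = {y, sig y}" "y \<noteq> sig y" "cmp (sig y) = cmp y" using sig_facts[OF y(1)] by auto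
      have mg: "mg_adj II en y (sig y)" unfolding mg_adj_def using f by blast
      have a1: "y \<in> cmp y" using cmp_mem by simp
      have "R y (sig y)" using sig_facts[OF y(1)] by blast
      then have a2: "sig y \<in> cmp y" using cmp_mem by blast
      have "y \<in> S \<inter> cmp y" "sig y \<in> S \<inter> cmp y" using a1 a2 s y(3) by blast+
      then show False using ind mg unfolding independent_in_def by blast
    qed
  qed
qed

theorem result: "\<exists>P. proper_path_factor X Y E P"
proof -
  have "X = (X - VH) \<union> II" unfolding II_def by blast
  then show ?thesis using core.core_result[OF core_inst] by simp
qed

end

theorem mainTheorem6:
  fixes X Y VH S :: "'a set" and E EH :: "'a \<Rightarrow> 'a \<Rightarrow> bool" and c :: "'a \<Rightarrow> 'a \<Rightarrow> nat"
  assumes "bigraph34 X Y E"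
    and "full_3reg_subgraph X Y E VH EH"
    and "proper_3_edge_colouring EH c"
    and "mixed_transversal Y (nbrs E ` (X - VH)) (X \<inter> VH)
           (\<lambda>x. {y. EH x y \<and> c x y \<in> {1,2}}) S"
  shows "\<exists>P. proper_path_factor X Y E P"
  using setupL.result[OF setupL.intro[OF assms]] .

end
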